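(* Let $r\ge 2$ and $p\ge (2r-1)r+2(r-1)$ be integers. Then $C_r(n,K_p^{(r)})=\Omega\!\left(n^{\frac{r}{r+1}}\right)$ as $n\to\infty$.
   Context: An $r$-graph is an $r$-uniform hypergraph; $K_n^{(r)}$ is the complete $r$-graph on $n$ vertices. A copy of an $r$-graph $H$ in $K_n^{(r)}$ is a subhypergraph isomorphic to $H$. An $(n,r,H)$-local coloring with $k$ colors is a family of edge-colorings $f_v:E(K_n^{(r)})\to[k]$, one per vertex $v$, such that for every copy $T$ of $H$ there is $u\in V(T)$ with $f_u$ injective on $E(T)$ (i.e. $T$ is rainbow under $f_u$). $C_r(n,H)$ is the minimum such $k$. *)

theory Defs
  imports Complex_Main
begin

text \<open>A copy of K_p^(r) is determined by its p-element vertex set S, its edges being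
  all r-subsets of S. A local colouring with k colours assigns to each vertex v
  a colouring f v of the edges with colours in {1..k}.\<close>

definition clique_local_coloring ::
  "nat \<Rightarrow> nat \<Rightarrow> nat \<Rightarrow> nat \<Rightarrow> (nat \<Rightarrow> nat set \<Rightarrow> nat) \<Rightarrow> bool" where
  "clique_local_coloring n r p k f \<longleftrightarrow>
     (\<forall>v<n. \<forall>e. e \<subseteq> {..<n} \<and> card e = r \<longrightarrow> f v e \<in> {1..k}) \<and>
     (\<forall>S. S \<subseteq> {..<n} \<and> card S = p \<longrightarrow>
        (\<exists>u\<in>S. inj_on (f u) {e. e \<subseteq> S \<and> card e = r}))"

definition C_clique :: "nat \<Rightarrow> nat \<Rightarrow> nat \<Rightarrow> nat" where
  "C_clique r n p = (LEAST k. \<exists>f. clique_local_coloring n r p k f)"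

end

theory Submission
  imports Defs
begin

lemma per_u:
  fixes G :: "nat \<Rightarrow> nat" and A :: "nat set"
  assumes fin: "finite A" and col: "\<forall>x\<in>A. G x \<in> {1..k}" and big: "4*k*m \<le> card A"
  shows "m * card A \<le> (\<Sum>x\<in>A. card {y\<in>A. y \<noteq> x \<and> G x = G y})"
proof -
  define cls where "cls x = {y\<in>A. G y = G x}" for x
  define Sm where "Sm = {x\<in>A. card (cls x) \<le> 2*m}"
  have finSm: "finite Sm" using fin by (simp add: Sm_def)
  have sub: "Sm \<subseteq> (\<Union>j\<in>{1..k}. {x\<in>A. G x = j \<and> card (cls x) \<le> 2*m})"
    using col by (auto simp: Sm_def)
  have piece: "card {x\<in>A. G x = j \<and> card (cls x) \<le> 2*m} \<le> 2*m" for j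
  proof (cases "\<exists>x0. x0 \<in> A \<and> G x0 = j \<and> card (cls x0) \<le> 2*m")
    case True
    then obtain x0 where x0: "x0 \<in> A" "G x0 = j" "card (cls x0) \<le> 2*m" by blast
    have "{x\<in>A. G x = j \<and> card (cls x) \<le> 2*m} \<subseteq> cls x0" using x0 by (auto simp: cls_def)
    then have "card {x\<in>A. G x = j \<and> card (cls x) \<le> 2*m} \<le> card (cls x0)"
      by (rule card_mono[rotated]) (simp add: cls_def fin)
    then show ?thesis using x0 by linarith
  next
    case False
    then have e: "{x\<in>A. G x = j \<and> card (cls x) \<le> 2*m} = {}" by blast
    show ?thesis unfolding e by simp
  qed
  have "card Sm \<le> card (\<Union>j\<in>{1..k}. {x\<in>A. G x = j \<and> card (cls x) \<le> 2*m})"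
    by (rule card_mono[OF _ sub]) (simp add: fin)
  also have "\<dots> \<le> (\<Sum>j\<in>{1..k}. card {x\<in>A. G x = j \<and> card (cls x) \<le> 2*m})"
    by (rule card_UN_le) simp
  also have "\<dots> \<le> (\<Sum>j\<in>{1..k}. 2*m)" by (rule sum_mono) (rule piece)
  also have "\<dots> = 2*m*k" by simp
  finally have cSm: "card Sm \<le> 2*m*k" .
  have d: "2*m \<le> card {y\<in>A. y \<noteq> x \<and> G x = G y}" if x: "x \<in> A - Sm" for x
  proof -
    have eq: "{y\<in>A. y \<noteq> x \<and> G x = G y} = cls x - {x}" by (auto simp: cls_def)
    have "x \<in> cls x" using x by (simp add: cls_def)
    moreover have "finite (cls x)" by (simp add: cls_def fin)
    ultimately have "card (cls x - {x}) = card (cls x) - 1" by simp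
    moreover have "card (cls x) > 2*m" using x by (auto simp: Sm_def)
    ultimately show ?thesis using eq by simp
  qed
  have "(\<Sum>x\<in>A - Sm. 2*m) \<le> (\<Sum>x\<in>A - Sm. card {y\<in>A. y \<noteq> x \<and> G x = G y})"
    by (rule sum_mono) (rule d)
  also have "\<dots> \<le> (\<Sum>x\<in>A. card {y\<in>A. y \<noteq> x \<and> G x = G y})"
    by (rule sum_mono2) (auto simp: fin)
  finally have s1: "card (A - Sm) * (2*m) \<le> (\<Sum>x\<in>A. card {y\<in>A. y \<noteq> x \<and> G x = G y})" by simp
  have "Sm \<subseteq> A" by (auto simp: Sm_def)
  then have cA: "card (A - Sm) = card A - card Sm" using finSm by (simp add: card_Diff_subset)
  have "4*k*m = 2*(2*m*k)" by simp
  then have "card A \<le> 2 * (card A - card Sm)" using cSm big by linarith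
  then have "m * card A \<le> m * (2 * (card A - card Sm))" by simp
  also have "\<dots> = card (A - Sm) * (2*m)" using cA by simp
  finally show ?thesis using s1 by linarith
qed

lemma card_filter_sum: "finite B \<Longrightarrow> card {y\<in>B. P y} = (\<Sum>y\<in>B. if P y then 1 else 0::nat)"
  by (simp add: sum.inter_filter[symmetric])

lemma pair_exists:
  fixes g :: "nat \<Rightarrow> nat \<Rightarrow> nat" and L :: "nat set"
  assumes fin: "finite L" and col: "\<forall>u\<in>L. \<forall>x\<in>L. x \<noteq> u \<longrightarrow> g u x \<in> {1..k}"
    and big: "4*k*m \<le> card L - 1" and m: "m \<ge> 1" and L2: "card L \<ge> 2"
  shows "\<exists>x\<in>L. \<exists>y\<in>L. x \<noteq> y \<and> m \<le> card {u\<in>L. u \<noteq> x \<and> u \<noteq> y \<and> g u x = g u y}"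
proof (rule ccontr)
  assume neg: "\<not> ?thesis"
  define I where "I u x y = (if u \<noteq> x \<and> u \<noteq> y \<and> x \<noteq> y \<and> g u x = g u y then 1 else 0::nat)" for u x y
  have lowU: "m * (card L - 1) \<le> (\<Sum>x\<in>L. \<Sum>y\<in>L. I u x y)" if u: "u \<in> L" for u
  proof -
    have cLu: "card (L - {u}) = card L - 1" using u fin by simp
    have colu: "\<forall>x\<in>L - {u}. g u x \<in> {1..k}" using col u by auto
    have "m * card (L - {u}) \<le> (\<Sum>x\<in>L - {u}. card {y\<in>L - {u}. y \<noteq> x \<and> g u x = g u y})"
      by (rule per_u[OF _ colu]) (use fin big cLu in auto)
    also have "\<dots> = (\<Sum>x\<in>L - {u}. \<Sum>y\<in>L. I u x y)"
    proof (rule sum.cong[OF refl])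
      fix x assume x: "x \<in> L - {u}"
      have "{y\<in>L - {u}. y \<noteq> x \<and> g u x = g u y} = {y\<in>L. u \<noteq> x \<and> u \<noteq> y \<and> x \<noteq> y \<and> g u x = g u y}"
        using x by auto
      then show "card {y\<in>L - {u}. y \<noteq> x \<and> g u x = g u y} = (\<Sum>y\<in>L. I u x y)"
        using fin by (simp add: card_filter_sum I_def)
    qed
    also have "\<dots> = (\<Sum>x\<in>L. \<Sum>y\<in>L. I u x y)"
    proof -
      have "(\<Sum>x\<in>L. \<Sum>y\<in>L. I u x y) = (\<Sum>y\<in>L. I u u y) + (\<Sum>x\<in>L - {u}. \<Sum>y\<in>L. I u x y)"
        by (rule sum.remove[OF fin u])
      moreover have "(\<Sum>y\<in>L. I u u y) = 0" by (simp add: I_def)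
      ultimately show ?thesis by simp
    qed
    finally show ?thesis using cLu by simp
  qed
  have "card L * (m * (card L - 1)) = (\<Sum>u\<in>L. m * (card L - 1))" by simp
  also have "\<dots> \<le> (\<Sum>u\<in>L. \<Sum>x\<in>L. \<Sum>y\<in>L. I u x y)" by (rule sum_mono) (rule lowU)
  also have "\<dots> = (\<Sum>x\<in>L. \<Sum>u\<in>L. \<Sum>y\<in>L. I u x y)" by (rule sum.swap)
  also have "\<dots> = (\<Sum>x\<in>L. \<Sum>y\<in>L. \<Sum>u\<in>L. I u x y)" by (rule sum.cong[OF refl]) (rule sum.swap)
  also have "\<dots> \<le> (\<Sum>x\<in>L. (card L - 1) * (m - 1))"
  proof (rule sum_mono)
    fix x assume x: "x \<in> L"
    have F: "(\<Sum>u\<in>L. I u x y) = card {u\<in>L. u \<noteq> x \<and> u \<noteq> y \<and> x \<noteq> y \<and> g u x = g u y}" for y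
      using fin by (simp add: card_filter_sum I_def)
    have F0: "(\<Sum>u\<in>L. I u x x) = 0" by (simp add: I_def)
    have Fy: "(\<Sum>u\<in>L. I u x y) \<le> m - 1" if y: "y \<in> L - {x}" for y
    proof -
      have "{u\<in>L. u \<noteq> x \<and> u \<noteq> y \<and> x \<noteq> y \<and> g u x = g u y} = {u\<in>L. u \<noteq> x \<and> u \<noteq> y \<and> g u x = g u y}"
        using y by auto
      moreover have "card {u\<in>L. u \<noteq> x \<and> u \<noteq> y \<and> g u x = g u y} < m"
      proof -
        have "y \<in> L" "x \<noteq> y" using y by auto
        then have "\<not> m \<le> card {u\<in>L. u \<noteq> x \<and> u \<noteq> y \<and> g u x = g u y}" using neg x by blast
        then show ?thesis by simp
      qed
      ultimately show ?thesis using F by simp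
    qed
    have "(\<Sum>y\<in>L. \<Sum>u\<in>L. I u x y) = (\<Sum>u\<in>L. I u x x) + (\<Sum>y\<in>L - {x}. \<Sum>u\<in>L. I u x y)"
      by (rule sum.remove[OF fin x])
    also have "\<dots> \<le> 0 + (\<Sum>y\<in>L - {x}. m - 1)"
      unfolding F0 by (rule add_left_mono, rule sum_mono, rule Fy)
    also have "\<dots> = (card L - 1) * (m - 1)" using x fin by simp
    finally show "(\<Sum>y\<in>L. \<Sum>u\<in>L. I u x y) \<le> (card L - 1) * (m - 1)" .
  qed
  also have "\<dots> = card L * ((card L - 1) * (m - 1))" by simp
  finally have "card L * (m * (card L - 1)) \<le> card L * ((card L - 1) * (m - 1))" .
  then have "m * (card L - 1) \<le> (card L - 1) * (m - 1)" using L2 by simp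
  moreover have "(card L - 1) * (m - 1) < (card L - 1) * m" using L2 m by simp
  ultimately show False by (simp add: mult.commute)
qed

lemma card_edge:
  assumes "r \<ge> 2" "a \<ge> r-2" "b \<ge> r-2" "a \<noteq> b"
  shows "card (insert a (insert b {..<r-2})) = r"
  using assms by auto

lemma no_coloring:
  assumes r2: "r \<ge> 2" and p: "r*r + 2*r \<le> p" and col: "clique_local_coloring n r p k f"
    and mp: "p \<le> m" and bin: "r * k < m choose r" and big: "4*k*m \<le> n - r + 1"
    and nr: "r \<le> n"
  shows False
proof -
  define T where "T = {..<r-2}"
  define L where "L = {r-2..<n}"
  define g where "g u x = f u (insert u (insert x T))" for u x
  have col1: "\<And>v e. v < n \<Longrightarrow> e \<subseteq> {..<n} \<Longrightarrow> card e = r \<Longrightarrow> f v e \<in> {1..k}"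
    using col unfolding clique_local_coloring_def by blast
  have col2: "\<And>S. S \<subseteq> {..<n} \<Longrightarrow> card S = p \<Longrightarrow> \<exists>u\<in>S. inj_on (f u) {e. e \<subseteq> S \<and> card e = r}"
    using col unfolding clique_local_coloring_def by blast
  have finL: "finite L" by (simp add: L_def)
  have cL: "card L = n - (r - 2)" by (simp add: L_def)
  have colL: "\<forall>u\<in>L. \<forall>x\<in>L. x \<noteq> u \<longrightarrow> g u x \<in> {1..k}"
  proof (intro ballI impI)
    fix u x assume u: "u \<in> L" and x: "x \<in> L" and ux: "x \<noteq> u"
    have "card (insert u (insert x T)) = r" unfolding T_def
      by (rule card_edge) (use r2 u x ux L_def in auto)
    moreover have "insert u (insert x T) \<subseteq> {..<n}" using u x r2 nr by (auto simp: T_def L_def)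
    moreover have "u < n" using u by (simp add: L_def)
    ultimately show "g u x \<in> {1..k}" unfolding g_def using col1 by blast
  qed
  have big': "4*k*m \<le> card L - 1" using big cL r2 nr by simp
  have m1: "m \<ge> 1" using mp p r2 by simp
  have L2: "card L \<ge> 2" using cL nr r2 by simp
  obtain x y where x: "x \<in> L" and y: "y \<in> L" and xy: "x \<noteq> y"
    and Hb: "m \<le> card {u\<in>L. u \<noteq> x \<and> u \<noteq> y \<and> g u x = g u y}"
    using pair_exists[OF finL colL big' m1 L2] by blast
  define H where "H = {u\<in>L. u \<noteq> x \<and> u \<noteq> y \<and> g u x = g u y}"
  obtain H0 where H0H: "H0 \<subseteq> H" and cH0: "card H0 = m" and finH0: "finite H0"
    using obtain_subset_with_card_n[of m H] Hb H_def by blast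
  define Ob where "Ob = insert x (insert y T)"
  have cO: "card Ob = r" unfolding Ob_def T_def by (rule card_edge) (use r2 x y xy L_def in auto)
  have finO: "finite Ob" by (simp add: Ob_def T_def)
  have On: "Ob \<subseteq> {..<n}" using x y r2 nr by (auto simp: Ob_def T_def L_def)
  have Hn: "H \<subseteq> {..<n}" by (auto simp: H_def L_def)
  have OH: "Ob \<inter> H = {}" by (auto simp: Ob_def T_def H_def L_def)
  define E where "E = {e. e \<subseteq> H0 \<and> card e = r}"
  have cE: "card E = m choose r" unfolding E_def using n_subsets[OF finH0, of r] cH0 by simp
  have finE: "finite E" unfolding E_def using finH0 by simp
  define Lon where "Lon w = {e\<in>E. \<forall>e'\<in>E. f w e' = f w e \<longrightarrow> e' = e}" for w
  have cLon: "card (Lon w) \<le> k" if w: "w \<in> Ob" for w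
  proof -
    have "inj_on (f w) (Lon w)" unfolding inj_on_def Lon_def by blast
    moreover have "f w ` Lon w \<subseteq> {1..k}"
    proof
      fix c assume "c \<in> f w ` Lon w"
      then obtain e where e: "e \<in> E" and c: "c = f w e" by (auto simp: Lon_def)
      have "e \<subseteq> {..<n}" using e H0H Hn by (auto simp: E_def)
      moreover have "w < n" using w On by auto
      ultimately show "c \<in> {1..k}" using col1 e c by (auto simp: E_def)
    qed
    ultimately have "card (Lon w) \<le> card {1..k}" by (rule card_inj_on_le) simp
    then show ?thesis by simp
  qed
  have "card (\<Union>w\<in>Ob. Lon w) \<le> (\<Sum>w\<in>Ob. card (Lon w))" by (rule card_UN_le[OF finO])
  also have "\<dots> \<le> (\<Sum>w\<in>Ob. k)" by (rule sum_mono) (rule cLon)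
  also have "\<dots> = r * k" using cO by simp
  finally have cU: "card (\<Union>w\<in>Ob. Lon w) < card E" using bin cE by simp
  have "\<not> E \<subseteq> (\<Union>w\<in>Ob. Lon w)"
  proof
    assume "E \<subseteq> (\<Union>w\<in>Ob. Lon w)"
    moreover have "finite (\<Union>w\<in>Ob. Lon w)" using finE by (rule finite_subset[rotated]) (auto simp: Lon_def)
    ultimately have "card E \<le> card (\<Union>w\<in>Ob. Lon w)" by (rule card_mono[rotated])
    then show False using cU by simp
  qed
  then obtain e where eE: "e \<in> E" and eL: "\<forall>w\<in>Ob. e \<notin> Lon w" by blast
  have "\<forall>w\<in>Ob. \<exists>e'. e' \<in> E \<and> e' \<noteq> e \<and> f w e' = f w e"
    using eE eL unfolding Lon_def by blast
  then obtain ew where ew: "\<forall>w\<in>Ob. ew w \<in> E \<and> ew w \<noteq> e \<and> f w (ew w) = f w e"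
    by metis
  define A where "A = e \<union> (\<Union>w\<in>Ob. ew w)"
  have AH0: "A \<subseteq> H0" using eE ew by (auto simp: A_def E_def)
  have "card A \<le> card e + card (\<Union>w\<in>Ob. ew w)" unfolding A_def by (rule card_Un_le)
  also have "\<dots> \<le> r + (\<Sum>w\<in>Ob. card (ew w))"
    using eE card_UN_le[OF finO, of ew] by (simp add: E_def)
  also have "\<dots> = r + r * r" using ew cO by (simp add: E_def)
  finally have cA: "card A \<le> r + r*r" .
  have finA: "finite A" using AH0 finH0 finite_subset by blast
  have "(p - r) - card A \<le> card (H0 - A)" using cA cH0 AH0 finA mp p by (simp add: card_Diff_subset)
  then obtain C where CH: "C \<subseteq> H0 - A" and cC: "card C = (p - r) - card A" and finC: "finite C"
    using obtain_subset_with_card_n by blast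
  define B where "B = A \<union> C"
  have cB: "card B = p - r"
  proof -
    have "A \<inter> C = {}" using CH by blast
    then have "card B = card A + card C" unfolding B_def using finA finC by (simp add: card_Un_disjoint)
    then show ?thesis using cC cA p by simp
  qed
  have BH: "B \<subseteq> H" using AH0 CH H0H by (auto simp: B_def)
  have finB: "finite B" using finA finC by (simp add: B_def)
  define S where "S = Ob \<union> B"
  have cS: "card S = p"
  proof -
    have "Ob \<inter> B = {}" using OH BH by blast
    then have "card S = card Ob + card B" unfolding S_def using finO finB by (simp add: card_Un_disjoint)
    then show ?thesis using cO cB p by simp
  qed
  have Sn: "S \<subseteq> {..<n}" using On BH Hn by (auto simp: S_def)
  obtain u where uS: "u \<in> S" and inj: "inj_on (f u) {e. e \<subseteq> S \<and> card e = r}"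
    using col2[OF Sn cS] by blast
  show False
  proof (cases "u \<in> Ob")
    case True
    have "e \<in> {e. e \<subseteq> S \<and> card e = r}" using eE AH0 by (auto simp: E_def A_def S_def B_def)
    moreover have "ew u \<in> {e. e \<subseteq> S \<and> card e = r}" using ew True
      by (auto simp: E_def A_def S_def B_def)
    ultimately show False using inj ew True unfolding inj_on_def by metis
  next
    case False
    then have uB: "u \<in> H" using uS BH by (auto simp: S_def)
    then have uL: "u \<in> L" "u \<noteq> x" "u \<noteq> y" and gxy: "g u x = g u y" by (auto simp: H_def)
    define e1 where "e1 = insert u (insert x T)"
    define e2 where "e2 = insert u (insert y T)"
    have ce1: "card e1 = r" unfolding e1_def T_def by (rule card_edge) (use r2 x uL L_def in auto)
    have ce2: "card e2 = r" unfolding e2_def T_def by (rule card_edge) (use r2 y uL L_def in auto)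
    have "u \<in> S" by fact
    then have "e1 \<subseteq> S" "e2 \<subseteq> S" by (auto simp: e1_def e2_def S_def Ob_def)
    moreover have "e1 \<noteq> e2"
    proof
      assume "e1 = e2"
      then have "x \<in> e2" unfolding e1_def by blast
      then show False using xy uL x by (auto simp: e2_def T_def L_def)
    qed
    moreover have "f u e1 = f u e2" using gxy by (simp add: g_def e1_def e2_def)
    ultimately show False using inj ce1 ce2 unfolding inj_on_def by blast
  qed
qed

lemma exists_col:
  assumes "p > 0"
  shows "\<exists>k f. clique_local_coloring n r p k f"
proof -
  define EA where "EA = {e. e \<subseteq> {..<n} \<and> card e = r}"
  have "finite EA" unfolding EA_def by (rule finite_subset[of _ "Pow {..<n}"]) auto
  then obtain h where h: "bij_betw h EA {0..<card EA}" using ex_bij_betw_finite_nat by blast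
  have "clique_local_coloring n r p (card EA) (\<lambda>v e. h e + 1)"
    unfolding clique_local_coloring_def
  proof (intro conjI allI impI)
    fix v e assume "v < n" "e \<subseteq> {..<n} \<and> card e = r"
    then have "e \<in> EA" by (simp add: EA_def)
    then have "h e < card EA" using h by (auto simp: bij_betw_def)
    then show "h e + 1 \<in> {1..card EA}" by simp
  next
    fix S assume S: "S \<subseteq> {..<n} \<and> card S = p"
    then have "S \<noteq> {}" using assms by auto
    then obtain u where "u \<in> S" by blast
    moreover have "inj_on (\<lambda>e. h e + 1) {e. e \<subseteq> S \<and> card e = r}"
    proof -
      have "inj_on h EA" using h by (simp add: bij_betw_def)
      moreover have "{e. e \<subseteq> S \<and> card e = r} \<subseteq> EA" using S by (auto simp: EA_def)
      ultimately have "inj_on h {e. e \<subseteq> S \<and> card e = r}" by (rule inj_on_subset)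
      then show ?thesis by (simp add: inj_on_def)
    qed
    ultimately show "\<exists>u\<in>S. inj_on (\<lambda>e. h e + 1) {e. e \<subseteq> S \<and> card e = r}" by blast
  qed
  then show ?thesis by blast
qed

theorem theorem3:
  fixes r p :: nat
  assumes "r \<ge> 2" and "p \<ge> (2*r - 1) * r + 2 * (r - 1)"
  shows "\<exists>c>0. \<exists>N. \<forall>n\<ge>N.
           real (C_clique r n p) \<ge> c * real n powr (real r / real (r + 1))"
proof -
  have r2: "r \<ge> 2" by (rule assms(1))
  define c :: real where "c = 1 / (16 * real r ^ (r+1))"
  have rpos: "real r > 0" using r2 by simp
  have c0: "c > 0" unfolding c_def using rpos by simp
  have pr: "r*r + 2*r \<le> p"
  proof -
    obtain s where s: "r = s + 2" using r2 by (metis add.commute le_Suc_ex)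
    have "r*r + 2*r \<le> (2*r - 1) * r + 2 * (r - 1)" unfolding s by (simp add: algebra_simps)
    then show ?thesis using assms(2) by linarith
  qed
  have p0: "p > 0" using pr r2 by simp
  show ?thesis
  proof (intro exI[of _ c] conjI c0 exI[of _ "max (p^(r+1)) (2*r)"] allI impI)
    fix n assume n: "max (p^(r+1)) (2*r) \<le> n"
    have np: "p^(r+1) \<le> n" and n2r: "2*r \<le> n" using n by auto
    have nr: "r \<le> n" using n2r by simp
    define k where "k = C_clique r n p"
    have "\<exists>f. clique_local_coloring n r p k f"
      unfolding k_def C_clique_def by (rule LeastI_ex) (rule exists_col[OF p0])
    then obtain f where f: "clique_local_coloring n r p k f" by blast
    show "c * real n powr (real r / real (r+1)) \<le> real (C_clique r n p)"
    proof (rule ccontr)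
      assume "\<not> ?thesis"
      then have kc: "real k < c * real n powr (real r / real (r+1))" unfolding k_def by simp
      have npos: "real n > 0" using n2r r2 by simp
      define t where "t = real n powr (1 / real (r+1))"
      have t0: "t > 0" unfolding t_def using npos by simp
      have tn: "t ^ (r+1) = real n"
      proof -
        have "t ^ (r+1) = t powr real (r+1)" by (rule powr_realpow[OF t0, symmetric])
        also have "\<dots> = real n powr (1 / real (r+1) * real (r+1))" unfolding t_def by (simp add: powr_powr)
        also have "\<dots> = real n" using npos by simp
        finally show ?thesis .
      qed
      have tr: "t ^ r = real n powr (real r / real (r+1))"
      proof -
        have "t ^ r = t powr real r" by (rule powr_realpow[OF t0, symmetric])
        also have "\<dots> = real n powr (1 / real (r+1) * real r)" unfolding t_def by (simp add: powr_powr)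
        finally show ?thesis by simp
      qed
      have tp: "real p \<le> t"
      proof (rule ccontr)
        assume "\<not> ?thesis"
        then have "t ^ (r+1) < real p ^ (r+1)" using t0 by (intro power_strict_mono) auto
        also have "\<dots> \<le> real n" using np by (metis of_nat_le_iff of_nat_power)
        finally show False using tn by simp
      qed
      have t1: "t \<ge> 1" using tp p0 by linarith
      define m where "m = nat \<lceil>t\<rceil>"
      have mt1: "t \<le> real m" unfolding m_def using t0 by linarith
      have mt2: "real m \<le> t + 1" unfolding m_def using t0 by linarith
      have pm: "p \<le> m" using tp mt1 by linarith
      have rm: "r \<le> m" using pm pr by linarith
      have kc': "real k < c * t ^ r" using kc tr by simp
      have bin: "r * k < m choose r"
      proof -
        have "real (r*k) = real r * real k" by simp
        also have "\<dots> < real r * (c * t ^ r)" using kc' rpos by simp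
        also have "\<dots> = t ^ r / (16 * real r ^ r)" unfolding c_def using rpos by (simp add: field_simps)
        also have "\<dots> \<le> t ^ r / real r ^ r" using rpos t0 by (simp add: divide_left_mono)
        also have "\<dots> = (t / real r) ^ r" by (simp add: power_divide)
        also have "\<dots> \<le> (real m / real r) ^ r" using mt1 t0 rpos by (intro power_mono divide_right_mono) auto
        also have "\<dots> \<le> real (m choose r)" using binomial_ge_n_over_k_pow_k[OF rm] by simp
        finally show ?thesis by linarith
      qed
      have big: "4*k*m \<le> n - r + 1"
      proof -
        have "real (4*k*m) = 4 * real k * real m" by simp
        also have "\<dots> \<le> 4 * real k * (2 * t)" using mt2 t1 by (intro mult_left_mono) auto
        also have "\<dots> \<le> 4 * (c * t ^ r) * (2 * t)" using kc' t0 by (intro mult_right_mono mult_left_mono) auto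
        also have "\<dots> = 8 * c * t ^ (r+1)" by (simp add: algebra_simps)
        also have "\<dots> = real n / (2 * real r ^ (r+1))" unfolding c_def tn by (simp add: field_simps)
        also have "\<dots> \<le> real n / 2"
        proof -
          have r1: "(1::real) \<le> real r" using r2 by simp
          have "real r ^ (r+1) \<ge> 1" by (rule one_le_power[OF r1])
          then show ?thesis by (intro divide_left_mono) (use npos in auto)
        qed
        also have "\<dots> \<le> real (n - r + 1)" using n2r nr by (simp add: of_nat_diff)
        finally show ?thesis by (simp only: of_nat_le_iff)
      qed
      show False by (rule no_coloring[OF r2 pr f pm bin big nr])
    qed
  qed
qed

end
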